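(* Let $k,s$ be integers with $k\geq 3$ and $s\geq 2$. Then: (1) $\mathrm{GR}_{3}(\vee_2:\mathcal{C}_s)=2s-1$. (2) The pair $(\vee_2,\mathcal{C}_s)$ is $(\vee_2:\mathcal{C}_s)_4$-good for $s\in\{2,3\}$, and $\mathrm{GR}_{4}(\vee_2:\mathcal{C}_s)=s$ for all $s\geq 4$. (3) If $k\geq 5$, the pair $(\vee_2,\mathcal{C}_s)$ is $(\vee_2:\mathcal{C}_s)_k$-good.
   Context: $\mathcal{B}_N$ denotes the Boolean lattice of all subsets of $[N]$ ordered by inclusion. For posets $\mathcal{P},\mathcal{Q}$, an induced copy of $\mathcal{P}$ in $\mathcal{Q}$ is the image of an injection $f:\mathcal{P}\to\mathcal{Q}$ with $f(X)\le f(Y)$ iff $X\le Y$. $\mathcal{C}_t$ is the $t$-element chain. $\vee_2$ is the poset on three elements $X_0,X_1,X_2$ with $X_0<X_1$, $X_0<X_2$ and $X_1,X_2$ incomparable. A $k$-coloring of $\mathcal{B}_N$ is exact if it uses colors from $[k]$ and every color is used at least once. Monochromatic: all sets share one color; rainbow: all sets have pairwise distinct colors. The pair $(\mathcal{Q},\mathcal{P})$ is $(\mathcal{Q}:\mathcal{P})_k$-good if for every positive integer $N$, every exact $k$-coloring of $\mathcal{B}_N$ contains a rainbow induced copy of $\mathcal{Q}$ or a monochromatic induced copy of $\mathcal{P}$. For a pair that is not good, $\mathrm{GR}_k(\mathcal{Q}:\mathcal{P})$ is the smallest integer $n$ such that for every $N\ge n$, every exact $k$-coloring of $\mathcal{B}_N$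 contains a rainbow induced copy of $\mathcal{Q}$ or a monochromatic induced copy of $\mathcal{P}$. *)

theory Defs
  imports Main
begin

type_synonym 'a poset = "'a set \<times> ('a \<Rightarrow> 'a \<Rightarrow> bool)"

text \<open>The Boolean lattice B_N: all subsets of [N], here represented as subsets of {0..<N}.\<close>
definition boolean_lattice :: "nat \<Rightarrow> nat set set" where
  "boolean_lattice N = Pow {0..<N}"

definition induced_copy :: "'a poset \<Rightarrow> nat \<Rightarrow> nat set set \<Rightarrow> bool" where
  "induced_copy P N S \<longleftrightarrow>
     (\<exists>f. inj_on f (fst P) \<and> f ` fst P \<subseteq> boolean_lattice N \<and>
          (\<forall>x\<in>fst P. \<forall>y\<in>fst P. (f x \<subseteq> f y \<longleftrightarrow> snd P x y)) \<and> S = f ` fst P)"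

definition chain_poset :: "nat \<Rightarrow> nat poset" where
  "chain_poset t = ({0..<t}, (\<le>))"

definition vee2 :: "nat poset" where
  "vee2 = ({0, 1, 2}, (\<lambda>x y. x = y \<or> x = 0))"

definition exact_coloring :: "nat \<Rightarrow> nat \<Rightarrow> (nat set \<Rightarrow> nat) \<Rightarrow> bool" where
  "exact_coloring k N c \<longleftrightarrow> c ` boolean_lattice N = {1..k}"

definition monochromatic :: "(nat set \<Rightarrow> nat) \<Rightarrow> nat set set \<Rightarrow> bool" where
  "monochromatic c S \<longleftrightarrow> (\<forall>x\<in>S. \<forall>y\<in>S. c x = c y)"

definition rainbow :: "(nat set \<Rightarrow> nat) \<Rightarrow> nat set set \<Rightarrow> bool" where
  "rainbow c S \<longleftrightarrow> inj_on c S"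

definition gr_property :: "nat \<Rightarrow> 'a poset \<Rightarrow> 'b poset \<Rightarrow> nat \<Rightarrow> bool" where
  "gr_property k Q P N \<longleftrightarrow>
     (\<forall>c. exact_coloring k N c \<longrightarrow>
        (\<exists>S. induced_copy Q N S \<and> rainbow c S) \<or>
        (\<exists>S. induced_copy P N S \<and> monochromatic c S))"

definition gr_good :: "nat \<Rightarrow> 'a poset \<Rightarrow> 'b poset \<Rightarrow> bool" where
  "gr_good k Q P \<longleftrightarrow> (\<forall>N. N > 0 \<longrightarrow> gr_property k Q P N)"

text \<open>GR_k(Q:P): the smallest n such that the property holds for all N \<ge> n
  (meaningful for pairs that are not good).\<close>
definition GR :: "nat \<Rightarrow> 'a poset \<Rightarrow> 'b poset \<Rightarrow> nat" where
  "GR k Q P = (LEAST n. \<forall>N\<ge>n. gr_property k Q P N)"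

end

theory Submission
  imports Defs
begin


definition norb :: "nat \<Rightarrow> (nat set \<Rightarrow> nat) \<Rightarrow> bool" where
 "norb N c \<longleftrightarrow> (\<forall>X0 X1 X2. X0 \<subset> X1 \<longrightarrow> X0 \<subset> X2 \<longrightarrow> \<not> X1 \<subseteq> X2 \<longrightarrow> \<not> X2 \<subseteq> X1
    \<longrightarrow> X1 \<subseteq> {0..<N} \<longrightarrow> X2 \<subseteq> {0..<N} \<longrightarrow> c X0 \<noteq> c X1 \<longrightarrow> c X0 \<noteq> c X2 \<longrightarrow> c X1 \<noteq> c X2 \<longrightarrow> False)"

lemma norbD: "norb N c \<Longrightarrow> X0 \<subset> X1 \<Longrightarrow> X0 \<subset> X2 \<Longrightarrow> \<not> X1 \<subseteq> X2 \<Longrightarrow> \<not> X2 \<subseteq> X1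
   \<Longrightarrow> X1 \<subseteq> {0..<N} \<Longrightarrow> X2 \<subseteq> {0..<N} \<Longrightarrow> c X0 \<noteq> c X1 \<Longrightarrow> c X0 \<noteq> c X2 \<Longrightarrow> c X1 \<noteq> c X2 \<Longrightarrow> False"
  unfolding norb_def by blast

lemma rv:
  assumes "X0 \<subset> X1" "X0 \<subset> X2" "\<not> X1 \<subseteq> X2" "\<not> X2 \<subseteq> X1" "X1 \<subseteq> {0..<N}" "X2 \<subseteq> {0..<N}"
    "c X0 \<noteq> c X1" "c X0 \<noteq> c X2" "c X1 \<noteq> c X2"
  shows "\<exists>S. induced_copy vee2 N S \<and> rainbow c S"
proof -
  define f where "f = (\<lambda>i::nat. if i = 0 then X0 else if i = 1 then X1 else X2)"
  have "induced_copy vee2 N (f ` {0,1,2})" unfolding induced_copy_def vee2_def boolean_lattice_def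
    apply (rule exI[of _ f]) using assms by (auto simp: f_def inj_on_def)
  moreover have "f ` {0,1,2} = {X0,X1,X2}" by (auto simp: f_def)
  moreover have "rainbow c {X0,X1,X2}" unfolding rainbow_def using assms by auto
  ultimately show ?thesis by metis
qed

lemma norbI: "\<not>(\<exists>S. induced_copy vee2 N S \<and> rainbow c S) \<Longrightarrow> norb N c"
  unfolding norb_def using rv by blast

lemma vee_inv:
  assumes "induced_copy vee2 N S" "rainbow c S"
  shows "\<exists>X0 X1 X2. X0 \<subset> X1 \<and> X0 \<subset> X2 \<and> \<not> X1 \<subseteq> X2 \<and> \<not> X2 \<subseteq> X1 \<and> X0 \<subseteq> {0..<N}
     \<and> X1 \<subseteq> {0..<N} \<and> X2 \<subseteq> {0..<N} \<and> c X0 \<noteq> c X1 \<and> c X0 \<noteq> c X2 \<and> c X1 \<noteq> c X2"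
proof -
  obtain f where f: "inj_on f {0,1,2}" "f ` {0,1,2} \<subseteq> Pow {0..<N}"
    "\<forall>x\<in>{0,1,2}. \<forall>y\<in>{0,1,2::nat}. (f x \<subseteq> f y \<longleftrightarrow> (x = y \<or> x = 0))" "S = f ` {0,1,2}"
    using assms(1) unfolding induced_copy_def vee2_def boolean_lattice_def by auto
  have i: "inj_on c {f 0, f 1, f 2}" using assms(2) f(4) unfolding rainbow_def by simp
  have d: "f 0 \<noteq> f 1" "f 0 \<noteq> f 2" "f 1 \<noteq> f 2" using f(1) by (auto dest: inj_onD)
  have "c (f 0) \<noteq> c (f 1)" "c (f 0) \<noteq> c (f 2)" "c (f 1) \<noteq> c (f 2)"
    using i d by (auto dest: inj_onD)
  moreover have "f 0 \<subset> f 1" "f 0 \<subset> f 2" "\<not> f 1 \<subseteq> f 2" "\<not> f 2 \<subseteq> f 1"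
    using f(3) d by auto
  moreover have "f 0 \<subseteq> {0..<N}" "f 1 \<subseteq> {0..<N}" "f 2 \<subseteq> {0..<N}" using f(2) by auto
  ultimately show ?thesis by blast
qed

lemma chain_inv:
  assumes "induced_copy (chain_poset s) N S" "monochromatic c S"
  shows "\<exists>f. (\<forall>i<s. \<forall>j<s. f i \<subseteq> f j \<longleftrightarrow> i \<le> j) \<and> (\<forall>i<s. f i \<subseteq> {0..<N}) \<and> (\<forall>i<s. \<forall>j<s. c (f i) = c (f j))"
proof -
  have "\<exists>f. inj_on f {0..<s} \<and> f ` {0..<s} \<subseteq> Pow {0..<N} \<and> (\<forall>x\<in>{0..<s}. \<forall>y\<in>{0..<s}. (f x \<subseteq> f y \<longleftrightarrow> x \<le> y)) \<and> S = f ` {0..<s}"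
    using assms(1) unfolding induced_copy_def chain_poset_def boolean_lattice_def fst_conv snd_conv .
  then obtain f where f: "f ` {0..<s} \<subseteq> Pow {0..<N}" "\<forall>x\<in>{0..<s}. \<forall>y\<in>{0..<s}. (f x \<subseteq> f y \<longleftrightarrow> x \<le> y)" "S = f ` {0..<s}"
    by blast
  have "\<forall>i<s. \<forall>j<s. c (f i) = c (f j)" using assms(2) f(3) unfolding monochromatic_def
    by (metis atLeastLessThan_iff imageI zero_le)
  moreover have "\<forall>i<s. f i \<subseteq> {0..<N}" using f(1) by (simp add: image_subset_iff)
  moreover have "\<forall>i<s. \<forall>j<s. f i \<subseteq> f j \<longleftrightarrow> i \<le> j" using f(2) by simp
  ultimately show ?thesis by blast
qed

lemma inner:
  assumes nr: "norb N c" and XY: "X \<subset> Y" and Y: "Y \<subseteq> {0..<N}" and p: "p < N" "p \<notin> Y"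
    and d: "c X \<noteq> c Y" "c {} \<noteq> c X" "c {} \<noteq> c Y"
  shows "c (insert p X) = c Y"
proof (rule ccontr)
  assume ne: "c (insert p X) \<noteq> c Y"
  have W: "insert p X \<subseteq> {0..<N}" using XY Y p by auto
  have pX: "p \<notin> X" using XY p by auto
  have XW: "X \<subset> insert p X" using pX by auto
  have n1: "\<not> insert p X \<subseteq> Y" using p by auto
  have n2: "\<not> Y \<subseteq> insert p X" using XY p by auto
  show False
  proof (cases "c (insert p X) = c {}")
    case True
    show False using norbD[OF nr XW XY n1 n2 W Y] True d ne by auto
  next
    case False
    have a: "{} \<subset> insert p X" by auto
    have b: "{} \<subset> Y" using XY by auto
    show False using norbD[OF nr a b n1 n2 W Y] False d ne by auto
  qed
qed

lemma key0:
  assumes nr: "norb N c" and XY: "X \<subset> Y" and Y: "Y \<subseteq> {0..<N}" "Y \<noteq> {0..<N}" and X: "X \<noteq> {}"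
    and d: "c X \<noteq> c Y" "c {} \<noteq> c X" "c {} \<noteq> c Y"
    and Z: "Z \<subseteq> {0..<N}" "\<not> Z \<subseteq> X" "\<not> X \<subseteq> Z"
  shows "c Z = c {}"
proof (rule ccontr)
  assume za: "c Z \<noteq> c {}"
  have X': "X \<subseteq> {0..<N}" using XY Y by auto
  have zb: "c Z = c X"
  proof (rule ccontr)
    assume "c Z \<noteq> c X"
    then show False using norbD[OF nr, of "{}" X Z] X Z X' d za by auto
  qed
  have ZY: "Z \<subseteq> Y"
  proof (rule ccontr)
    assume nzy: "\<not> Z \<subseteq> Y"
    have "\<not> Y \<subseteq> Z" using XY Z by auto
    then show False using norbD[OF nr, of "{}" Y Z] nzy Y Z XY d zb za by auto
  qed
  have "\<exists>p. p < N \<and> p \<notin> Y" using Y by (metis atLeast0LessThan lessThan_iff subsetI subset_antisym)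
  then obtain p where p: "p < N" "p \<notin> Y" by blast
  have cw: "c (insert p X) = c Y" using inner[OF nr XY Y(1) p d] .
  have n1: "\<not> Z \<subseteq> insert p X" using ZY p Z by auto
  have n2: "\<not> insert p X \<subseteq> Z" using Z by auto
  have W: "insert p X \<subseteq> {0..<N}" using X' p by auto
  show False using norbD[OF nr, of "{}" Z "insert p X"] n1 n2 W Z zb cw d za by auto
qed

lemma ch: "finite U \<Longrightarrow> \<exists>f. (\<forall>i \<le> card U. f i \<subseteq> U \<and> card (f i) = i) \<and> (\<forall>i j. i \<le> j \<longrightarrow> j \<le> card U \<longrightarrow> f i \<subseteq> f j)"
proof (induction U rule: finite_induct)
  case empty
  then show ?case by (intro exI[of _ "\<lambda>_. {}"]) auto
next
  case (insert u U)
  then obtain f where f1: "\<forall>i \<le> card U. f i \<subseteq> U \<and> card (f i) = i"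
    and f2: "\<forall>i j. i \<le> j \<longrightarrow> j \<le> card U \<longrightarrow> f i \<subseteq> f j" by blast
  define g where "g i = (if i \<le> card U then f i else insert u U)" for i
  have cU: "card (insert u U) = Suc (card U)" using insert by simp
  have "\<forall>i \<le> card (insert u U). g i \<subseteq> insert u U \<and> card (g i) = i"
    using f1 cU insert by (auto simp: g_def le_Suc_eq)
  moreover have "\<forall>i j. i \<le> j \<longrightarrow> j \<le> card (insert u U) \<longrightarrow> g i \<subseteq> g j"
    using f1 f2 cU by (auto simp: g_def)
  ultimately show ?case by blast
qed

lemma ch2: assumes "finite U" obtains f where "\<forall>i \<le> card U. f i \<subseteq> U \<and> card (f i) = i"
   "\<forall>i \<le> card U. \<forall>j \<le> card U. f i \<subseteq> f j \<longleftrightarrow> i \<le> j"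
proof -
  obtain f where f1: "\<forall>i \<le> card U. f i \<subseteq> U \<and> card (f i) = i"
    and f2: "\<forall>i j. i \<le> j \<longrightarrow> j \<le> card U \<longrightarrow> f i \<subseteq> f j" using ch[OF assms] by blast
  have "\<forall>i \<le> card U. \<forall>j \<le> card U. f i \<subseteq> f j \<longleftrightarrow> i \<le> j"
  proof (intro allI impI iffI)
    fix i j assume ij: "i \<le> card U" "j \<le> card U" and s: "f i \<subseteq> f j"
    show "i \<le> j"
    proof (rule ccontr)
      assume "\<not> i \<le> j"
      then have "f j \<subseteq> f i" using f2 ij by auto
      then have "f i = f j" using s by auto
      then have "card (f i) = card (f j)" by simp
      then show False using f1 ij \<open>\<not> i \<le> j\<close> by simp
    qed
  next
    fix i j assume "i \<le> card U" "j \<le> card U" "i \<le> j" then show "f i \<subseteq> f j" using f2 by auto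
  qed
  then show ?thesis using that f1 by blast
qed

lemma mono_ext:
  assumes g: "\<forall>i<(n::nat). \<forall>j<n. g i \<subseteq> g j \<longleftrightarrow> i \<le> j" and gB: "\<forall>i<n. g i \<subseteq> {0..<N}"
    and J: "J \<subseteq> {0..<n}" "card J = s" and col: "\<forall>i\<in>J. \<forall>j\<in>J. c (g i) = c (g j)"
  shows "\<exists>S. induced_copy (chain_poset s) N S \<and> monochromatic c S"
proof -
  define L where "L = sorted_list_of_set J"
  have fin: "finite J" using J finite_subset by blast
  have len: "length L = s" using J fin by (simp add: L_def)
  have setL: "set L = J" using fin by (simp add: L_def)
  have ss: "sorted_wrt (<) L" by (simp add: L_def strict_sorted_list_of_set)
  have inJ: "\<forall>i<s. L ! i \<in> J" using len setL nth_mem by blast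
  have ord: "\<forall>i<s. \<forall>j<s. L ! i \<le> L ! j \<longleftrightarrow> i \<le> j"
  proof (intro allI impI)
    fix i j assume ij: "i < s" "j < s"
    show "L ! i \<le> L ! j \<longleftrightarrow> i \<le> j"
    proof
      assume a: "L ! i \<le> L ! j"
      show "i \<le> j"
      proof (rule ccontr)
        assume "\<not> i \<le> j"
        then have "L ! j < L ! i" using sorted_wrt_nth_less[OF ss, of j i] ij len by simp
        then show False using a by simp
      qed
    next
      assume a: "i \<le> j"
      show "L ! i \<le> L ! j"
      proof (cases "i = j")
        case False
        then show ?thesis using sorted_wrt_nth_less[OF ss, of i j] ij len a by simp
      qed simp
    qed
  qed
  define h where "h i = g (L ! i)" for i
  have hiff: "\<forall>i<s. \<forall>j<s. h i \<subseteq> h j \<longleftrightarrow> i \<le> j" using ord inJ J g by (auto simp: h_def subset_iff)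
  have hB: "\<forall>i<s. h i \<subseteq> {0..<N}" using inJ J gB by (auto simp: h_def subset_iff)
  have inj: "inj_on h {0..<s}" unfolding inj_on_def
  proof (intro ballI impI)
    fix x y assume "x \<in> {0..<s}" "y \<in> {0..<s}" "h x = h y"
    then have "x \<le> y" "y \<le> x" using hiff by auto
    then show "x = y" by simp
  qed
  have "induced_copy (chain_poset s) N (h ` {0..<s})"
    unfolding induced_copy_def chain_poset_def boolean_lattice_def
    apply (rule exI[of _ h]) using inj hiff hB by auto
  moreover have "monochromatic c (h ` {0..<s})" unfolding monochromatic_def
  proof (intro ballI)
    fix u v assume "u \<in> h ` {0..<s}" "v \<in> h ` {0..<s}"
    then obtain i j where ij: "i < s" "j < s" "u = h i" "v = h j" by auto
    have "L ! i \<in> J" "L ! j \<in> J" using inJ ij by auto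
    then have "c (g (L ! i)) = c (g (L ! j))" using col by blast
    then show "c u = c v" using ij by (simp add: h_def)
  qed
  ultimately show ?thesis by blast
qed



lemma keychain0:
  assumes nr: "norb N c" and XY: "X \<subset> Y" and Y: "Y \<subseteq> {0..<N}" "Y \<noteq> {0..<N}" and X: "X \<noteq> {}"
    and d: "c X \<noteq> c Y" "c {} \<noteq> c X" "c {} \<noteq> c Y"
  shows "3 \<le> N \<and> (\<exists>g. (\<forall>i<N. \<forall>j<N. g i \<subseteq> g j \<longleftrightarrow> i \<le> j) \<and> (\<forall>i<N. g i \<subseteq> {0..<N} \<and> c (g i) = c {}))"
proof -
  have fY: "finite Y" using Y finite_subset by blast
  have fX: "finite X" using XY fY finite_subset by blast
  have c1: "card X \<ge> 1" using fX X by (simp add: Suc_le_eq card_gt_0_iff)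
  have c2: "card X < card Y" using psubset_card_mono[OF fY XY] .
  have c3: "card Y < N" using psubset_card_mono[of "{0..<N}" Y] Y by auto
  have N3: "3 \<le> N" using c1 c2 c3 by linarith
  obtain x where x: "x \<in> X" using X by auto
  obtain y where y: "y \<in> Y" "y \<notin> X" using XY by auto
  have xN: "x < N" "y < N" using x y XY Y by auto
  have xy: "x \<noteq> y" using x y by auto
  define U where "U = {0..<N} - {x,y}"
  have fU: "finite U" by (simp add: U_def)
  have cU: "card U = N - 2" unfolding U_def using xN xy by (subst card_Diff_subset) auto
  obtain f where f1: "\<forall>i \<le> card U. f i \<subseteq> U \<and> card (f i) = i"
    and f2: "\<forall>i \<le> card U. \<forall>j \<le> card U. f i \<subseteq> f j \<longleftrightarrow> i \<le> j" using ch2[OF fU] by blast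
  define g where "g i = (if i = 0 then {} else insert y (f (i - 1)))" for i
  have yf: "\<And>i. i \<le> card U \<Longrightarrow> y \<notin> f i \<and> x \<notin> f i \<and> f i \<subseteq> {0..<N}" using f1 by (auto simp: U_def)
  have giff: "\<forall>i<N. \<forall>j<N. g i \<subseteq> g j \<longleftrightarrow> i \<le> j"
  proof (intro allI impI)
    fix i j assume ij: "i < N" "j < N"
    show "g i \<subseteq> g j \<longleftrightarrow> i \<le> j"
    proof (cases "i = 0")
      case True then show ?thesis by (simp add: g_def)
    next
      case False
      show ?thesis
      proof (cases "j = 0")
        case True then show ?thesis using False by (simp add: g_def)
      next
        case False': False
        have le: "i - 1 \<le> card U" "j - 1 \<le> card U" using ij cU by auto
        have y1: "y \<notin> f (i - 1)" "y \<notin> f (j - 1)" using yf le by auto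
        have "g i \<subseteq> g j \<longleftrightarrow> f (i-1) \<subseteq> f (j-1)" using y1 False False' by (auto simp: g_def)
        also have "\<dots> \<longleftrightarrow> i - 1 \<le> j - 1" using f2 le by blast
        also have "\<dots> \<longleftrightarrow> i \<le> j" using False False' by auto
        finally show ?thesis .
      qed
    qed
  qed
  have gc: "\<forall>i<N. g i \<subseteq> {0..<N} \<and> c (g i) = c {}"
  proof (intro allI impI)
    fix i assume i: "i < N"
    show "g i \<subseteq> {0..<N} \<and> c (g i) = c {}"
    proof (cases "i = 0")
      case True then show ?thesis by (simp add: g_def)
    next
      case False
      have le: "i - 1 \<le> card U" using i cU by auto
      have sub: "y \<notin> f (i - 1)" "x \<notin> f (i - 1)" "f (i - 1) \<subseteq> {0..<N}" using yf[OF le] by auto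
      have Z: "g i \<subseteq> {0..<N}" using sub xN False by (simp add: g_def)
      have n1: "\<not> g i \<subseteq> X" using y False by (simp add: g_def)
      have n2: "\<not> X \<subseteq> g i" using x xy sub False by (auto simp: g_def)
      show ?thesis using Z key0[OF nr XY Y X d Z n1 n2] by simp
    qed
  qed
  show ?thesis using N3 giff gc by blast
qed

lemma keychain:
  assumes nr: "norb N c" and X: "X \<subseteq> {0..<N}" "X \<noteq> {}" "X \<noteq> {0..<N}"
    and Y: "Y \<subseteq> {0..<N}" "Y \<noteq> {}" "Y \<noteq> {0..<N}"
    and d: "c X \<noteq> c Y" "c {} \<noteq> c X" "c {} \<noteq> c Y"
  shows "3 \<le> N \<and> (\<exists>g. (\<forall>i<N. \<forall>j<N. g i \<subseteq> g j \<longleftrightarrow> i \<le> j) \<and> (\<forall>i<N. g i \<subseteq> {0..<N} \<and> c (g i) = c {}))"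
proof -
  have "X \<subseteq> Y \<or> Y \<subseteq> X"
  proof (rule ccontr)
    assume "\<not> (X \<subseteq> Y \<or> Y \<subseteq> X)"
    then show False using norbD[OF nr, of "{}" X Y] X Y d by auto
  qed
  moreover have "X \<noteq> Y" using d by auto
  ultimately have "X \<subset> Y \<or> Y \<subset> X" by auto
  then show ?thesis
  proof
    assume h: "X \<subset> Y" show ?thesis using keychain0[OF nr h Y(1) Y(3) X(2) d] .
  next
    assume h: "Y \<subset> X" show ?thesis using keychain0[OF nr h X(1) X(3) Y(2) d(1)[symmetric] d(3) d(2)] .
  qed
qed

lemma l3:
  assumes nr: "norb N c" and a: "X \<subset> Y" "Y \<subset> Z" "Z \<subseteq> {0..<N}" "Z \<noteq> {0..<N}"
  and d: "c X \<noteq> c Y" "c X \<noteq> c Z" "c Y \<noteq> c Z" "c {} \<noteq> c X" "c {} \<noteq> c Y" "c {} \<noteq> c Z"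
  shows False
proof -
  have "\<exists>p. p < N \<and> p \<notin> Z" using a by (metis atLeast0LessThan lessThan_iff subsetI subset_antisym)
  then obtain p where p: "p < N" "p \<notin> Z" by blast
  have Y': "Y \<subseteq> {0..<N}" "p \<notin> Y" using a p by auto
  have XZ: "X \<subset> Z" using a by auto
  have "c (insert p X) = c Y" using inner[OF nr a(1) Y'(1) p(1) Y'(2) d(1) d(4) d(5)] .
  moreover have "c (insert p X) = c Z" using inner[OF nr XZ a(3) p d(2) d(4) d(6)] .
  ultimately show False using d(3) by simp
qed

definition Mset :: "nat \<Rightarrow> nat set set" where
  "Mset N = {X. X \<subseteq> {0..<N} \<and> X \<noteq> {} \<and> X \<noteq> {0..<N}}"

lemma colset:
  assumes ex: "exact_coloring k N c"
  shows "k \<le> card (c ` Mset N - {c {}}) + 2" "finite (c ` Mset N - {c {}})"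
proof -
  define C where "C = c ` Mset N - {c {}}"
  have fM: "finite (Mset N)" by (rule finite_subset[of _ "Pow {0..<N}"]) (auto simp: Mset_def)
  have fin: "finite C" unfolding C_def using fM by simp
  have "{1..k} \<subseteq> insert (c {}) (insert (c {0..<N}) C)"
  proof
    fix v assume "v \<in> {1..k}"
    then obtain X where X: "X \<subseteq> {0..<N}" "v = c X" using ex unfolding exact_coloring_def boolean_lattice_def
      by (metis PowD imageE)
    show "v \<in> insert (c {}) (insert (c {0..<N}) C)"
    proof (cases "X = {} \<or> X = {0..<N}")
      case True then show ?thesis using X by auto
    next
      case False
      then have "X \<in> Mset N" using X by (simp add: Mset_def)
      then show ?thesis using X unfolding C_def by blast
    qed
  qed
  then have "card {1..k} \<le> card (insert (c {}) (insert (c {0..<N}) C))"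
    by (rule card_mono[rotated]) (simp add: fin)
  also have "\<dots> \<le> Suc (card (insert (c {0..<N}) C))" using fin by (simp add: card_insert_if)
  also have "\<dots> \<le> Suc (Suc (card C))" using fin by (simp add: card_insert_if)
  finally show "k \<le> card (c ` Mset N - {c {}}) + 2" by (simp add: C_def)
  show "finite (c ` Mset N - {c {}})" using fin by (simp add: C_def)
qed

lemma col2:
  assumes ex: "exact_coloring k N c" and k: "4 \<le> k"
  shows "\<exists>X Y. X \<in> Mset N \<and> Y \<in> Mset N \<and> c X \<noteq> c Y \<and> c {} \<noteq> c X \<and> c {} \<noteq> c Y"
proof -
  have "2 \<le> card (c ` Mset N - {c {}})" using colset(1)[OF ex] k by linarith
  then obtain T where T: "T \<subseteq> c ` Mset N - {c {}}" "card T = 2" by (metis obtain_subset_with_card_n)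
  then obtain u v where uv: "T = {u, v}" "u \<noteq> v" by (metis card_2_iff)
  have "u \<in> c ` Mset N - {c {}}" "v \<in> c ` Mset N - {c {}}" using T(1) uv by auto
  then obtain X Y where "X \<in> Mset N" "Y \<in> Mset N" "u = c X" "v = c Y" "u \<noteq> c {}" "v \<noteq> c {}" by blast
  then show ?thesis using uv(2) by metis
qed

lemma col3:
  assumes ex: "exact_coloring k N c" and k: "5 \<le> k"
  shows "\<exists>X Y Z. X \<in> Mset N \<and> Y \<in> Mset N \<and> Z \<in> Mset N \<and> c X \<noteq> c Y \<and> c X \<noteq> c Z \<and> c Y \<noteq> c Z
     \<and> c {} \<noteq> c X \<and> c {} \<noteq> c Y \<and> c {} \<noteq> c Z"
proof -
  have "3 \<le> card (c ` Mset N - {c {}})" using colset(1)[OF ex] k by linarith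
  then obtain T where T: "T \<subseteq> c ` Mset N - {c {}}" "card T = 3" by (metis obtain_subset_with_card_n)
  then obtain u v w where uv: "T = {u, v, w}" "u \<noteq> v" "v \<noteq> w" "u \<noteq> w" by (metis card_3_iff)
  have "u \<in> c ` Mset N - {c {}}" "v \<in> c ` Mset N - {c {}}" "w \<in> c ` Mset N - {c {}}" using T(1) uv by auto
  then obtain X Y Z where "X \<in> Mset N" "Y \<in> Mset N" "Z \<in> Mset N" "u = c X" "v = c Y" "w = c Z"
     "u \<noteq> c {}" "v \<noteq> c {}" "w \<noteq> c {}" by blast
  then show ?thesis using uv(2-4) by metis
qed



lemma chain_to_mono:
  assumes g: "\<forall>i<N. \<forall>j<N. g i \<subseteq> g j \<longleftrightarrow> i \<le> j" and gc: "\<forall>i<N. g i \<subseteq> {0..<N} \<and> c (g i) = col"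
    and sN: "s \<le> N"
  shows "\<exists>S. induced_copy (chain_poset s) N S \<and> monochromatic c S"
proof -
  have gB: "\<forall>i<N. g i \<subseteq> {0..<N}" using gc by blast
  have gcol: "\<forall>i\<in>{0..<s}. \<forall>j\<in>{0..<s}. c (g i) = c (g j)"
  proof (intro ballI)
    fix i j assume "i \<in> {0..<s}" "j \<in> {0..<s}"
    then have "i < N" "j < N" using sN by auto
    then have "c (g i) = col" "c (g j) = col" using gc by blast+
    then show "c (g i) = c (g j)" by simp
  qed
  have J: "{0..<s} \<subseteq> {0..<N}" "card {0..<s} = s" using sN by auto
  show ?thesis using mono_ext[OF g gB J gcol] .
qed

lemma up_gen3:
  assumes nr: "norb N c" and sN: "2*s \<le> N+1" and s1: "1 \<le> s"
  shows "\<exists>S. induced_copy (chain_poset s) N S \<and> monochromatic c S"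
proof (cases "\<exists>X Y. X \<in> Mset N \<and> Y \<in> Mset N \<and> c X \<noteq> c Y \<and> c {} \<noteq> c X \<and> c {} \<noteq> c Y")
  case True
  then obtain X Y where XY: "X \<in> Mset N" "Y \<in> Mset N" "c X \<noteq> c Y" "c {} \<noteq> c X" "c {} \<noteq> c Y" by blast
  have X: "X \<subseteq> {0..<N}" "X \<noteq> {}" "X \<noteq> {0..<N}" using XY(1) by (simp_all add: Mset_def)
  have Y: "Y \<subseteq> {0..<N}" "Y \<noteq> {}" "Y \<noteq> {0..<N}" using XY(2) by (simp_all add: Mset_def)
  obtain g where g: "\<forall>i<N. \<forall>j<N. g i \<subseteq> g j \<longleftrightarrow> i \<le> j" "\<forall>i<N. g i \<subseteq> {0..<N} \<and> c (g i) = c {}"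
    using keychain[OF nr X Y XY(3-5)] by blast
  show ?thesis by (rule chain_to_mono[OF g]) (use sN s1 in linarith)
next
  case False note nk = this
  have fU: "finite {0..<N}" by simp
  obtain f where f1: "\<forall>i \<le> card {0..<N}. f i \<subseteq> {0..<N} \<and> card (f i) = i"
    and f2: "\<forall>i \<le> card {0..<N}. \<forall>j \<le> card {0..<N}. f i \<subseteq> f j \<longleftrightarrow> i \<le> j" using ch2[OF fU] by blast
  have f1': "\<forall>i\<le>N. f i \<subseteq> {0..<N} \<and> card (f i) = i" using f1 by simp
  have f2': "\<forall>i<N. \<forall>j<N. f i \<subseteq> f j \<longleftrightarrow> i \<le> j" using f2 by simp
  have fB: "\<forall>i<N. f i \<subseteq> {0..<N}" using f1' by simp
  define Ia where "Ia = {i \<in> {0..<N}. c (f i) = c {}}"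
  define Io where "Io = {i \<in> {0..<N}. c (f i) \<noteq> c {}}"
  have "Ia \<union> Io = {0..<N}" "Ia \<inter> Io = {}" by (auto simp: Ia_def Io_def)
  then have cs: "card Ia + card Io = N"
    by (metis card_Un_disjoint card_atLeastLessThan diff_zero finite_Un finite_atLeastLessThan)
  show ?thesis
  proof (cases "s \<le> card Ia")
    case True
    obtain J where J: "J \<subseteq> Ia" "card J = s" by (metis obtain_subset_with_card_n True)
    have J': "J \<subseteq> {0..<N}" using J unfolding Ia_def by blast
    have col: "\<forall>i\<in>J. \<forall>j\<in>J. c (f i) = c (f j)"
    proof (intro ballI)
      fix i j assume "i \<in> J" "j \<in> J"
      then have "c (f i) = c {}" "c (f j) = c {}" using J unfolding Ia_def by blast+
      then show "c (f i) = c (f j)" by simp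
    qed
    show ?thesis using mono_ext[OF f2' fB J' J(2) col] .
  next
    case False
    then have "s \<le> card Io" using cs sN by linarith
    then obtain J where J: "J \<subseteq> Io" "card J = s" by (metis obtain_subset_with_card_n)
    have J': "J \<subseteq> {0..<N}" using J unfolding Io_def by blast
    have inM: "f i \<in> Mset N \<and> c {} \<noteq> c (f i)" if "i \<in> J" for i
    proof -
      have i: "i < N" "c (f i) \<noteq> c {}" using J that unfolding Io_def by auto
      have a: "f i \<subseteq> {0..<N}" "card (f i) = i" using f1' i by auto
      have b: "f i \<noteq> {}" using i(2) by auto
      have "f i \<noteq> {0..<N}" using a i by auto
      then show ?thesis using a b i unfolding Mset_def by auto
    qed
    have col: "\<forall>i\<in>J. \<forall>j\<in>J. c (f i) = c (f j)"
    proof (intro ballI)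
      fix i j assume "i \<in> J" "j \<in> J"
      then have "f i \<in> Mset N" "f j \<in> Mset N" "c {} \<noteq> c (f i)" "c {} \<noteq> c (f j)" using inM by auto
      then show "c (f i) = c (f j)" using nk by blast
    qed
    show ?thesis using mono_ext[OF f2' fB J' J(2) col] .
  qed
qed

lemma up3:
  assumes "2 \<le> s" "2*s - 1 \<le> N"
  shows "gr_property 3 vee2 (chain_poset s) N"
  unfolding gr_property_def
proof (intro allI impI)
  fix c assume "exact_coloring 3 N c"
  show "(\<exists>S. induced_copy vee2 N S \<and> rainbow c S) \<or> (\<exists>S. induced_copy (chain_poset s) N S \<and> monochromatic c S)"
  proof (cases "\<exists>S. induced_copy vee2 N S \<and> rainbow c S")
    case True then show ?thesis by blast
  next
    case False
    then have nr: "norb N c" by (rule norbI)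
    have "\<exists>S. induced_copy (chain_poset s) N S \<and> monochromatic c S"
      by (rule up_gen3[OF nr]) (use assms in linarith)+
    then show ?thesis by blast
  qed
qed

lemma up4:
  assumes "s \<le> N \<or> s \<le> 3"
  shows "gr_property 4 vee2 (chain_poset s) N"
  unfolding gr_property_def
proof (intro allI impI)
  fix c assume ex: "exact_coloring 4 N c"
  show "(\<exists>S. induced_copy vee2 N S \<and> rainbow c S) \<or> (\<exists>S. induced_copy (chain_poset s) N S \<and> monochromatic c S)"
  proof (cases "\<exists>S. induced_copy vee2 N S \<and> rainbow c S")
    case True then show ?thesis by blast
  next
    case False
    then have nr: "norb N c" by (rule norbI)
    obtain X Y where XY: "X \<in> Mset N" "Y \<in> Mset N" "c X \<noteq> c Y" "c {} \<noteq> c X" "c {} \<noteq> c Y"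
      using col2[OF ex] by auto
    have X: "X \<subseteq> {0..<N}" "X \<noteq> {}" "X \<noteq> {0..<N}" using XY(1) by (simp_all add: Mset_def)
    have Y: "Y \<subseteq> {0..<N}" "Y \<noteq> {}" "Y \<noteq> {0..<N}" using XY(2) by (simp_all add: Mset_def)
    have K: "3 \<le> N \<and> (\<exists>g. (\<forall>i<N. \<forall>j<N. g i \<subseteq> g j \<longleftrightarrow> i \<le> j) \<and> (\<forall>i<N. g i \<subseteq> {0..<N} \<and> c (g i) = c {}))"
      using keychain[OF nr X Y XY(3-5)] .
    then obtain g where g: "\<forall>i<N. \<forall>j<N. g i \<subseteq> g j \<longleftrightarrow> i \<le> j" "\<forall>i<N. g i \<subseteq> {0..<N} \<and> c (g i) = c {}"
      by blast
    have "s \<le> N" using K assms by linarith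
    then have "\<exists>S. induced_copy (chain_poset s) N S \<and> monochromatic c S"
      by (rule chain_to_mono[OF g])
    then show ?thesis by blast
  qed
qed

lemma up5:
  assumes "5 \<le> k"
  shows "gr_property k vee2 (chain_poset s) N"
  unfolding gr_property_def
proof (intro allI impI)
  fix c assume ex: "exact_coloring k N c"
  show "(\<exists>S. induced_copy vee2 N S \<and> rainbow c S) \<or> (\<exists>S. induced_copy (chain_poset s) N S \<and> monochromatic c S)"
  proof (cases "\<exists>S. induced_copy vee2 N S \<and> rainbow c S")
    case True then show ?thesis by blast
  next
    case False
    then have nr: "norb N c" by (rule norbI)
    obtain X Y Z where XYZ: "X \<in> Mset N" "Y \<in> Mset N" "Z \<in> Mset N" "c X \<noteq> c Y" "c X \<noteq> c Z" "c Y \<noteq> c Z"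
     "c {} \<noteq> c X" "c {} \<noteq> c Y" "c {} \<noteq> c Z"
      using col3[OF ex assms] by blast
    have cmp: "P \<subset> Q \<or> Q \<subset> P" if "P \<in> Mset N" "Q \<in> Mset N" "c P \<noteq> c Q" "c {} \<noteq> c P" "c {} \<noteq> c Q" for P Q
    proof -
      have "P \<subseteq> Q \<or> Q \<subseteq> P"
      proof (rule ccontr)
        assume "\<not> (P \<subseteq> Q \<or> Q \<subseteq> P)"
        then show False using norbD[OF nr, of "{}" P Q] that unfolding Mset_def by auto
      qed
      moreover have "P \<noteq> Q" using that by auto
      ultimately show ?thesis by auto
    qed
    have l3': False if "P \<subset> Q" "Q \<subset> R" "R \<in> Mset N" "c P \<noteq> c Q" "c P \<noteq> c R" "c Q \<noteq> c R"
       "c {} \<noteq> c P" "c {} \<noteq> c Q" "c {} \<noteq> c R" for P Q R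
      using l3[OF nr that(1,2) _ _ that(4-9)] that(3) unfolding Mset_def by blast
    have s: "c Y \<noteq> c X" "c Z \<noteq> c X" "c Z \<noteq> c Y" using XYZ by auto
    have c1: "X \<subset> Y \<or> Y \<subset> X" using cmp XYZ by blast
    have c2: "X \<subset> Z \<or> Z \<subset> X" using cmp XYZ by blast
    have c3: "Y \<subset> Z \<or> Z \<subset> Y" using cmp XYZ by blast
    from c1 c2 c3 have False
      using l3'[of X Y Z] l3'[of X Z Y] l3'[of Y X Z] l3'[of Y Z X] l3'[of Z X Y] l3'[of Z Y X] XYZ s
      by blast
    then show ?thesis ..
  qed
qed



lemma cardchain:
  assumes f1: "\<forall>i<s. \<forall>j<s. f i \<subseteq> f j \<longleftrightarrow> i \<le> j" and f2: "\<forall>i<s. f i \<subseteq> {0..<(N::nat)}"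
  shows "\<forall>i<s. card (f 0) + i \<le> card (f i)"
proof (intro allI impI)
  fix i :: nat assume "i < s" then show "card (f 0) + i \<le> card (f i)"
  proof (induction i)
    case 0 then show ?case by simp
  next
    case (Suc i)
    have a: "f i \<subseteq> f (Suc i)" using f1[rule_format, of i "Suc i"] Suc.prems by simp
    have b: "\<not> f (Suc i) \<subseteq> f i" using f1[rule_format, of "Suc i" i] Suc.prems by simp
    have fin: "finite (f (Suc i))" using f2 Suc.prems by (meson finite_atLeastLessThan finite_subset)
    have "card (f i) < card (f (Suc i))" using psubset_card_mono[OF fin] a b by blast
    then show ?case using Suc by simp
  qed
qed

lemma fail3:
  assumes s2: "2 \<le> s"
  shows "\<not> gr_property 3 vee2 (chain_poset s) (2*s-2)"
proof -
  define N where "N = 2*s - 2"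
  define c where "c X = (if X = {0..<N} then 3 else if card X < s - 1 then 1 else (2::nat))" for X
  have Npos: "0 < N" using s2 by (simp add: N_def)
  have ne1: "{} \<noteq> {0..<N}" using Npos by simp
  have ne2: "{0..<s-1} \<noteq> {0..<N}"
  proof
    assume "{0..<s-1} = {0..<N}"
    then have "card {0..<s-1} = card {0..<N}" by simp
    then show False using s2 by (simp add: N_def)
  qed
  have ex: "exact_coloring 3 N c"
    unfolding exact_coloring_def boolean_lattice_def
  proof
    show "c ` Pow {0..<N} \<subseteq> {1..3}" by (auto simp: c_def)
    have "c {} = 1" using ne1 s2 by (simp add: c_def)
    moreover have "c {0..<s-1} = 2" using ne2 by (simp add: c_def)
    moreover have "c {0..<N} = 3" by (simp add: c_def)
    moreover have "{} \<in> Pow {0..<N}" "{0..<s-1} \<in> Pow {0..<N}" "{0..<N} \<in> Pow {0..<N}"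
      using s2 by (auto simp: N_def)
    ultimately have "1 \<in> c ` Pow {0..<N}" "2 \<in> c ` Pow {0..<N}" "3 \<in> c ` Pow {0..<N}"
      by (metis image_eqI)+
    moreover have "{1..3::nat} = {1,2,3}" by auto
    ultimately show "{1..3} \<subseteq> c ` Pow {0..<N}" by auto
  qed
  have nr: "\<not>(\<exists>S. induced_copy vee2 N S \<and> rainbow c S)"
  proof
    assume "\<exists>S. induced_copy vee2 N S \<and> rainbow c S"
    then obtain S where S: "induced_copy vee2 N S" "rainbow c S" by blast
    obtain X0 X1 X2 where X: "X0 \<subset> X1" "X0 \<subset> X2" "\<not> X1 \<subseteq> X2" "\<not> X2 \<subseteq> X1" "X0 \<subseteq> {0..<N}"
     "X1 \<subseteq> {0..<N}" "X2 \<subseteq> {0..<N}" "c X0 \<noteq> c X1" "c X0 \<noteq> c X2" "c X1 \<noteq> c X2"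
      using vee_inv[OF S] by blast
    have "X1 \<noteq> {0..<N}" "X2 \<noteq> {0..<N}" "X0 \<noteq> {0..<N}" using X by auto
    then show False using X(8-10) by (simp add: c_def split: if_splits)
  qed
  have nm: "\<not>(\<exists>S. induced_copy (chain_poset s) N S \<and> monochromatic c S)"
  proof
    assume "\<exists>S. induced_copy (chain_poset s) N S \<and> monochromatic c S"
    then obtain S where S: "induced_copy (chain_poset s) N S" "monochromatic c S" by blast
    obtain f where f: "\<forall>i<s. \<forall>j<s. f i \<subseteq> f j \<longleftrightarrow> i \<le> j" "\<forall>i<s. f i \<subseteq> {0..<N}"
       "\<forall>i<s. \<forall>j<s. c (f i) = c (f j)" using chain_inv[OF S] by blast
    have "s - 1 < s" using s2 by simp
    then have cc: "card (f 0) + (s-1) \<le> card (f (s-1))" using cardchain[OF f(1) f(2)] by blast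
    have col: "c (f 0) = c (f (s-1))" using f(3)[rule_format, of 0 "s-1"] s2 by simp
    have n01: "\<not> f 1 \<subseteq> f 0" using f(1)[rule_format, of 1 0] s2 by simp
    have f1B: "f 1 \<subseteq> {0..<N}" using f(2) s2 by simp
    have f0: "f 0 \<noteq> {0..<N}" using n01 f1B by auto
    have c0: "c (f 0) \<noteq> 3" using f0 by (simp add: c_def)
    have fs: "f (s-1) \<noteq> {0..<N}" using col c0 by (auto simp: c_def)
    have fsB: "f (s-1) \<subseteq> {0..<N}" using f(2) s2 by simp
    have "card (f (s-1)) < card {0..<N}" using fs fsB by (meson finite_atLeastLessThan psubsetI psubset_card_mono)
    then have lt: "card (f (s-1)) < N" by simp
    show False using col f0 fs cc lt s2 unfolding c_def N_def by (simp split: if_splits)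
  qed
  show ?thesis unfolding gr_property_def N_def[symmetric] using ex nr nm by blast
qed

lemma fail4:
  assumes s4: "4 \<le> s"
  shows "\<not> gr_property 4 vee2 (chain_poset s) (s-1)"
proof -
  define N where "N = s - 1"
  have N3: "3 \<le> N" using s4 by (simp add: N_def)
  define c where "c X = (if X = {0..<N} then 4 else if X = {0} then 3 else if 0 \<in> X then 2 else (1::nat))" for X
  have i2: "2 \<in> {0..<N}" "1 \<in> {0..<N}" "0 \<in> {0..<N}" using N3 by auto
  have n2: "(2::nat) \<notin> {0,1}" "(1::nat) \<notin> {0}" "(0::nat) \<notin> {}" by simp_all
  have ne: "{} \<noteq> {0..<N}" "{0,1} \<noteq> {0..<N}" "{0} \<noteq> {0..<N}" using i2 n2 by metis+
  have ex: "exact_coloring 4 N c"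
    unfolding exact_coloring_def boolean_lattice_def
  proof
    show "c ` Pow {0..<N} \<subseteq> {1..4}" by (auto simp: c_def)
    have "{0,1::nat} \<noteq> {0}" by simp
    then have "c {} = 1" "c {0,1} = 2" "c {0} = 3" "c {0..<N} = 4" using ne unfolding c_def by simp_all
    moreover have "{} \<in> Pow {0..<N}" "{0,1} \<in> Pow {0..<N}" "{0} \<in> Pow {0..<N}" "{0..<N} \<in> Pow {0..<N}"
      using i2 by auto
    ultimately have "1 \<in> c ` Pow {0..<N}" "2 \<in> c ` Pow {0..<N}" "3 \<in> c ` Pow {0..<N}" "4 \<in> c ` Pow {0..<N}"
      by (metis image_eqI)+
    moreover have "{1..4::nat} = {1,2,3,4}" by auto
    ultimately show "{1..4} \<subseteq> c ` Pow {0..<N}" by auto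
  qed
  have nr: "\<not>(\<exists>S. induced_copy vee2 N S \<and> rainbow c S)"
  proof
    assume "\<exists>S. induced_copy vee2 N S \<and> rainbow c S"
    then obtain S where S: "induced_copy vee2 N S" "rainbow c S" by blast
    obtain X0 X1 X2 where X: "X0 \<subset> X1" "X0 \<subset> X2" "\<not> X1 \<subseteq> X2" "\<not> X2 \<subseteq> X1" "X0 \<subseteq> {0..<N}"
     "X1 \<subseteq> {0..<N}" "X2 \<subseteq> {0..<N}" "c X0 \<noteq> c X1" "c X0 \<noteq> c X2" "c X1 \<noteq> c X2"
      using vee_inv[OF S] by blast
    have nN: "X1 \<noteq> {0..<N}" "X2 \<noteq> {0..<N}" "X0 \<noteq> {0..<N}" using X by auto
    show False
    proof (cases "X0 = {0}")
      case True
      then have "0 \<in> X1" "0 \<in> X2" "X1 \<noteq> {0}" "X2 \<noteq> {0}" using X(1,2) by auto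
      then show False using X(10) nN by (simp add: c_def)
    next
      case F0: False
      show False
      proof (cases "X1 = {0}")
        case True
        then have "X0 = {}" using X(1) by auto
        then have "c X0 = 1" using ne by (simp add: c_def)
        moreover have "0 \<notin> X2" using True X(3) by auto
        ultimately show False using X(9) nN \<open>X0 = {}\<close> by (simp add: c_def split: if_splits)
      next
        case F1: False
        show False
        proof (cases "X2 = {0}")
          case True
          then have "X0 = {}" using X(2) by auto
          then have "c X0 = 1" using ne by (simp add: c_def)
          moreover have "0 \<notin> X1" using True X(4) by auto
          ultimately show False using X(8) nN \<open>X0 = {}\<close> by (simp add: c_def split: if_splits)
        next
          case F2: False
          show False using X(8-10) nN F0 F1 F2 by (simp add: c_def split: if_splits)
        qed
      qed
    qed
  qed
  have nm: "\<not>(\<exists>S. induced_copy (chain_poset s) N S \<and> monochromatic c S)"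
  proof
    assume "\<exists>S. induced_copy (chain_poset s) N S \<and> monochromatic c S"
    then obtain S where S: "induced_copy (chain_poset s) N S" "monochromatic c S" by blast
    obtain f where f: "\<forall>i<s. \<forall>j<s. f i \<subseteq> f j \<longleftrightarrow> i \<le> j" "\<forall>i<s. f i \<subseteq> {0..<N}"
       "\<forall>i<s. \<forall>j<s. c (f i) = c (f j)" using chain_inv[OF S] by blast
    have sN: "s = Suc N" using s4 by (simp add: N_def)
    have "N < s" using sN by simp
    then have cc: "card (f 0) + N \<le> card (f N)" using cardchain[OF f(1) f(2)] by blast
    have col: "c (f 0) = c (f N)" using f(3)[rule_format, of 0 N] sN by simp
    have fNB: "f N \<subseteq> {0..<N}" "f 0 \<subseteq> {0..<N}" using f(2) sN by auto
    have le: "card (f N) \<le> N" using card_mono[OF _ fNB(1)] by simp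
    have "card (f 0) = 0" using cc le by simp
    moreover have "finite (f 0)" by (rule finite_subset[OF fNB(2)]) simp
    ultimately have e: "f 0 = {}" by simp
    have cN: "card (f N) = card {0..<N}" using cc le by simp
    have fN: "f N = {0..<N}" by (rule card_subset_eq[OF _ fNB(1) cN]) simp
    show False using col e fN ne by (simp add: c_def)
  qed
  show ?thesis unfolding gr_property_def N_def[symmetric] using ex nr nm by blast
qed

lemma GR_eq:
  assumes "\<forall>N\<ge>m. P N" "\<not> P (m - 1)" "1 \<le> (m::nat)"
  shows "(LEAST n. \<forall>N\<ge>n. P N) = m"
proof (rule Least_equality)
  show "\<forall>N\<ge>m. P N" by fact
  fix y assume y: "\<forall>N\<ge>y. P N"
  show "m \<le> y"
  proof (rule ccontr)
    assume "\<not> m \<le> y"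
    then have "y \<le> m - 1" by simp
    then show False using y assms(2) by blast
  qed
qed

theorem theorem1p3:
  shows "(\<forall>s::nat. s \<ge> 2 \<longrightarrow>
            \<not> gr_good 3 vee2 (chain_poset s) \<and> GR 3 vee2 (chain_poset s) = 2 * s - 1)
       \<and> (gr_good 4 vee2 (chain_poset 2) \<and> gr_good 4 vee2 (chain_poset 3)
          \<and> (\<forall>s::nat. s \<ge> 4 \<longrightarrow>
               \<not> gr_good 4 vee2 (chain_poset s) \<and> GR 4 vee2 (chain_poset s) = s))
       \<and> (\<forall>(k::nat) (s::nat). k \<ge> 5 \<and> s \<ge> 2 \<longrightarrow> gr_good k vee2 (chain_poset s))"
proof (intro conjI allI impI)
  fix s :: nat assume s: "2 \<le> s"
  show "\<not> gr_good 3 vee2 (chain_poset s)"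
  proof -
    have "0 < 2*s-2" using s by simp
    then show ?thesis unfolding gr_good_def using fail3[OF s] by blast
  qed
  show "GR 3 vee2 (chain_poset s) = 2 * s - 1"
    unfolding GR_def
  proof (rule GR_eq)
    show "\<forall>N\<ge>2 * s - 1. gr_property 3 vee2 (chain_poset s) N" using up3 s by blast
    have "2 * s - 1 - 1 = 2 * s - 2" by simp
    then show "\<not> gr_property 3 vee2 (chain_poset s) (2 * s - 1 - 1)" using fail3[OF s] by simp
    show "1 \<le> 2 * s - 1" using s by simp
  qed
next
  show "gr_good 4 vee2 (chain_poset 2)" unfolding gr_good_def using up4 by simp
  show "gr_good 4 vee2 (chain_poset 3)" unfolding gr_good_def using up4 by simp
next
  fix s :: nat assume s: "4 \<le> s"
  show "\<not> gr_good 4 vee2 (chain_poset s)"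
  proof -
    have "0 < s-1" using s by simp
    then show ?thesis unfolding gr_good_def using fail4[OF s] by blast
  qed
  show "GR 4 vee2 (chain_poset s) = s"
    unfolding GR_def
  proof (rule GR_eq)
    show "\<forall>N\<ge>s. gr_property 4 vee2 (chain_poset s) N" using up4 by blast
    show "\<not> gr_property 4 vee2 (chain_poset s) (s - 1)" using fail4[OF s] .
    show "1 \<le> s" using s by simp
  qed
next
  fix k s :: nat assume "5 \<le> k \<and> 2 \<le> s"
  then show "gr_good k vee2 (chain_poset s)" unfolding gr_good_def using up5 by blast
qed


end
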